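(* Let $X$ be a Tychonoff space that is locally dense-pseudocompact. Then $X$ is discrete.
   Context: A space is pseudocompact if every continuous real-valued function on it is bounded. A space $Y$ is dense-pseudocompact if every dense subset of $Y$ (with the subspace topology) is pseudocompact. A space $X$ is locally dense-pseudocompact if for every $x\in X$ and every neighborhood $U$ of $x$ there is a neighborhood $V$ of $x$ with $V\subset U$ such that $V$ (as a subspace) is dense-pseudocompact. *)

theory Defs
  imports "HOL-Analysis.Analysis"
begin

definition tychonoff_space :: "'a topology \<Rightarrow> bool" where
  "tychonoff_space X \<longleftrightarrow> t1_space X \<and> completely_regular_space X"

definition pseudocompact_space :: "'a topology \<Rightarrow> bool" where
  "pseudocompact_space Y \<longleftrightarrow>
     (\<forall>f::'a \<Rightarrow> real. continuous_map Y euclideanreal f \<longrightarrow> bounded (f ` topspace Y))"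

definition dense_pseudocompact_space :: "'a topology \<Rightarrow> bool" where
  "dense_pseudocompact_space Y \<longleftrightarrow>
     (\<forall>D. D \<subseteq> topspace Y \<and> Y closure_of D = topspace Y
          \<longrightarrow> pseudocompact_space (subtopology Y D))"

text \<open>Neighbourhoods are open sets containing the point (Engelking's convention).\<close>
definition locally_dense_pseudocompact :: "'a topology \<Rightarrow> bool" where
  "locally_dense_pseudocompact X \<longleftrightarrow>
     (\<forall>x U. x \<in> U \<and> openin X U \<longrightarrow>
        (\<exists>V. openin X V \<and> x \<in> V \<and> V \<subseteq> U \<and> dense_pseudocompact_space (subtopology X V)))"

end

theory Submission
  imports Defs
begin

lemma sep_step:
  assumes H: "Hausdorff_space X" and nx: "\<not> openin X {x}"
    and W: "openin X W" "x \<in> W"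
  shows "\<exists>P Q. openin X P \<and> openin X Q \<and> P \<noteq> {} \<and> P \<subseteq> W \<and> Q \<subseteq> W \<and> x \<in> Q \<and> P \<inter> Q = {}"
proof -
  have "W \<noteq> {x}" using W nx by auto
  then obtain y where y: "y \<in> W" "y \<noteq> x"
    using W by blast
  have yx: "y \<in> topspace X" "x \<in> topspace X" using W y openin_subset[OF W(1)] by blast+
  obtain A B where AB: "openin X A" "openin X B" "y \<in> A" "x \<in> B" "disjnt A B"
    using H yx y unfolding Hausdorff_space_def by metis
  show ?thesis
    apply (rule exI[of _ "A \<inter> W"], rule exI[of _ "B \<inter> W"])
    using AB W y by (auto simp: disjnt_def)
qed

lemma disjoint_seq:
  assumes H: "Hausdorff_space X" and nx: "\<not> openin X {x}"
    and V: "openin X V" "x \<in> V"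
  shows "\<exists>U::nat \<Rightarrow> 'a set. (\<forall>n. openin X (U n) \<and> U n \<noteq> {} \<and> U n \<subseteq> V)
          \<and> (\<forall>m n. m \<noteq> n \<longrightarrow> U m \<inter> U n = {})"
proof -
  define R where "R W P Q \<longleftrightarrow> (openin X W \<and> x \<in> W \<longrightarrow>
     openin X P \<and> openin X Q \<and> P \<noteq> {} \<and> P \<subseteq> W \<and> Q \<subseteq> W
       \<and> x \<in> Q \<and> P \<inter> Q = {})" for W P Q
  have ex: "\<exists>P Q. R W P Q" for W
  proof (cases "openin X W \<and> x \<in> W")
    case True
    have "\<exists>P Q. openin X P \<and> openin X Q \<and> P \<noteq> {} \<and> P \<subseteq> W \<and> Q \<subseteq> W
       \<and> x \<in> Q \<and> P \<inter> Q = {}"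
      using True by (intro sep_step[OF H nx]) simp_all
    then show ?thesis unfolding R_def by simp
  next
    case False
    then have "R W {} {}" unfolding R_def by simp
    then show ?thesis by (intro exI)
  qed
  have "\<forall>W. \<exists>P. \<exists>Q. R W P Q" using ex by blast
  then have "\<exists>p. \<forall>W. \<exists>Q. R W (p W) Q" by (rule choice)
  then obtain p where p: "\<forall>W. \<exists>Q. R W (p W) Q" ..
  then have "\<exists>q. \<forall>W. R W (p W) (q W)" by (rule choice)
  then obtain q where pq0: "\<forall>W. R W (p W) (q W)" ..
  have pq: "R W (p W) (q W)" for W using pq0 by blast
  have c: "openin X (p W) \<and> openin X (q W) \<and> p W \<noteq> {} \<and> p W \<subseteq> W \<and> q W \<subseteq> W
       \<and> x \<in> q W \<and> p W \<inter> q W = {}" if "openin X W" "x \<in> W" for W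
    using pq[of W] that unfolding R_def by (simp only: simp_thms)
  define Ws where "Ws = rec_nat V (\<lambda>_ W. q W)"
  have Ws0: "Ws 0 = V" and WsS: "\<And>n. Ws (Suc n) = q (Ws n)"
    by (simp_all add: Ws_def)
  have inv: "openin X (Ws n) \<and> x \<in> Ws n \<and> Ws n \<subseteq> V" for n
  proof (induction n)
    case 0 then show ?case using V by (simp add: Ws0)
  next
    case (Suc n) then show ?case using c[of "Ws n"] by (auto simp: WsS)
  qed
  have dec: "Ws (Suc n) \<subseteq> Ws n" for n using c[of "Ws n"] inv[of n] by (simp add: WsS)
  have decle: "Ws m \<subseteq> Ws n" if "n \<le> m" for m n
    using that by (rule lift_Suc_antimono_le[of Ws, OF dec])
  define U where "U n = p (Ws n)" for n
  have U1: "openin X (U n) \<and> U n \<noteq> {} \<and> U n \<subseteq> Ws n \<and> U n \<inter> Ws (Suc n) = {}" for n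
    using c[of "Ws n"] inv[of n] by (simp add: U_def WsS)
  have disj: "U m \<inter> U n = {}" if "n < m" for m n
  proof -
    have "U m \<subseteq> Ws (Suc n)" using U1[of m] decle[of "Suc n" m] that by auto
    then show ?thesis using U1[of n] by auto
  qed
  have "U m \<inter> U n = {}" if "m \<noteq> n" for m n
  proof (cases "n < m")
    case True then show ?thesis using disj by blast
  next
    case False then have "m < n" using that by simp
    then show ?thesis using disj[of m n] by blast
  qed
  moreover have "openin X (U n) \<and> U n \<noteq> {} \<and> U n \<subseteq> V" for n
    using U1[of n] inv[of n] by blast
  ultimately show ?thesis by blast
qed

lemma not_pseudo:
  fixes U :: "nat \<Rightarrow> 'a set"
  assumes CR: "completely_regular_space X" and V: "openin X V"
    and U: "\<And>n. openin X (U n)" "\<And>n. U n \<noteq> {}" "\<And>n. U n \<subseteq> V"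
    and disj: "\<And>m n. m \<noteq> n \<Longrightarrow> U m \<inter> U n = {}"
  shows "\<exists>D. D \<subseteq> V \<and> V \<subseteq> X closure_of D \<and> \<not> pseudocompact_space (subtopology X D)"
proof -
  define W where "W = \<Union>(range U)"
  define D where "D = W \<union> (V - X closure_of W)"
  have WV: "W \<subseteq> V" using U W_def by auto
  have Vt: "V \<subseteq> topspace X" by (rule openin_subset[OF V])
  have DV: "D \<subseteq> V" using WV D_def by auto
  have dense: "V \<subseteq> X closure_of D"
  proof
    fix v assume v: "v \<in> V"
    show "v \<in> X closure_of D"
    proof (cases "v \<in> X closure_of W")
      case True
      then show ?thesis using closure_of_mono[of W D X] D_def by auto
    next
      case False
      then have "v \<in> D" using v D_def by auto
      then show ?thesis using closure_of_subset[of D X] DV Vt by auto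
    qed
  qed
  define Qp where "Qp n y g \<longleftrightarrow> y \<in> U n \<and> continuous_map X euclideanreal g \<and> g y = 1 \<and>
            (\<forall>z \<in> topspace X - U n. g z = 0)" for n y and g :: "'a \<Rightarrow> real"
  have "\<forall>n. \<exists>y g. y \<in> U n \<and> continuous_map X euclideanreal g \<and> g y = 1 \<and>
            (\<forall>z \<in> topspace X - U n. g z = 0)"
  proof
    fix n
    obtain y where y: "y \<in> U n" using U(2)[of n] by auto
    have cl: "closedin X (topspace X - U n)" using U(1) by blast
    have yt: "y \<in> topspace X - (topspace X - U n)" using y openin_subset[OF U(1)[of n]] by blast
    obtain f :: "'a \<Rightarrow> real" where f: "continuous_map X (top_of_set {0..1}) f" "f y = 0"
      "f ` (topspace X - U n) \<subseteq> {1}"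
      using CR[unfolded completely_regular_space_def, rule_format, OF conjI[OF cl yt]]
      by (elim exE conjE)
    have fc: "continuous_map X euclideanreal f"
      using f(1) unfolding continuous_map_in_subtopology by (rule conjunct1)
    have "continuous_map X euclideanreal (\<lambda>z. 1 - f z)"
      by (intro continuous_intros fc)
    then show "\<exists>y g. y \<in> U n \<and> continuous_map X euclideanreal g \<and> g y = 1 \<and>
            (\<forall>z \<in> topspace X - U n. g z = 0)"
      using y f by (intro exI[of _ y] exI[of _ "\<lambda>z. 1 - f z"]) auto
  qed
  then have "\<forall>n. \<exists>y. \<exists>g. Qp n y g" unfolding Qp_def .
  then have "\<exists>y. \<forall>n. \<exists>g. Qp n (y n) g" by (rule choice)
  then obtain y where "\<forall>n. \<exists>g. Qp n (y n) g" ..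
  then have "\<exists>g. \<forall>n. Qp n (y n) (g n)" by (rule choice)
  then obtain g where Qyg: "\<forall>n. Qp n (y n) (g n)" ..
  have yg: "\<And>n. y n \<in> U n" "\<And>n. continuous_map X euclideanreal (g n)"
    "\<And>n. g n (y n) = 1" "\<And>n z. z \<in> topspace X - U n \<Longrightarrow> g n z = 0"
    using Qyg unfolding Qp_def by blast+
  define idx where "idx z = (SOME n. z \<in> U n)" for z
  have idx: "z \<in> U n \<Longrightarrow> idx z = n" for z n
  proof -
    assume zn: "z \<in> U n"
    then have "z \<in> U (idx z)" unfolding idx_def by (rule someI)
    then show "idx z = n" using disj[of "idx z" n] zn by blast
  qed
  define F where "F z = (if z \<in> W then real (idx z) * g (idx z) z else 0)" for z
  define T where "T i = (case i of None \<Rightarrow> V - X closure_of W | Some n \<Rightarrow> U n)" for i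
  define Fi where "Fi i = (case i of None \<Rightarrow> (\<lambda>z. 0::real) | Some n \<Rightarrow> (\<lambda>z. real n * g n z))" for i
  have TD: "T i \<subseteq> D" for i by (cases i) (auto simp: T_def D_def W_def)
  have Topen: "openin X (T i)" for i
  proof (cases i)
    case None
    have "openin X (V - X closure_of W)" by (rule openin_diff[OF V closedin_closure_of])
    then show ?thesis using None by (simp add: T_def)
  next
    case (Some n) then show ?thesis using U(1)[of n] by (simp add: T_def)
  qed
  have cont: "continuous_map (subtopology X D) euclideanreal F"
  proof (rule pasting_lemma[where I=UNIV and T=T and f=Fi])
    fix i :: "nat option"
    show "openin (subtopology X D) (T i)"
      using openin_subtopology_Int[OF Topen[of i], of D] TD[of i] by (simp add: Int_absorb2)
    have "continuous_map X euclideanreal (Fi i)"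
    proof (cases i)
      case None then show ?thesis by (simp add: Fi_def continuous_map_const)
    next
      case (Some n)
      have "continuous_map X euclideanreal (\<lambda>z. real n * g n z)"
        by (rule continuous_map_real_mult[OF _ yg(2)]) simp
      then show ?thesis using Some by (simp add: Fi_def)
    qed
    then show "continuous_map (subtopology (subtopology X D) (T i)) euclideanreal (Fi i)"
      by (intro continuous_map_from_subtopology)
  next
    fix i j :: "nat option" and z
    assume z: "z \<in> topspace (subtopology X D) \<inter> T i \<inter> T j"
    have UW: "U n \<subseteq> X closure_of W" for n
      using closure_of_subset[of W X] WV Vt W_def by blast
    show "Fi i z = Fi j z"
    proof (cases i)
      case None then show ?thesis
      proof (cases j)
        case (Some m) then show ?thesis using None z UW[of m] by (simp add: T_def) blast
      qed (simp add: None)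
    next
      case (Some n) then show ?thesis
      proof (cases j)
        case None then show ?thesis using Some z UW[of n] by (simp add: T_def) blast
      next
        case (Some m)
        have "n = m"
        proof (rule ccontr)
          assume "n \<noteq> m"
          then have "U n \<inter> U m = {}" by (rule disj)
          then show False using z \<open>i = Some n\<close> Some by (simp add: T_def) blast
        qed
        then show ?thesis using Some \<open>i = Some n\<close> by simp
      qed
    qed
  next
    fix z assume z: "z \<in> topspace (subtopology X D)"
    then have zD: "z \<in> D" by simp
    show "\<exists>j. j \<in> UNIV \<and> z \<in> T j \<and> F z = Fi j z"
    proof (cases "z \<in> W")
      case True
      then obtain n where n: "z \<in> U n" by (auto simp: W_def)
      then show ?thesis using True idx[OF n]
        by (intro exI[of _ "Some n"]) (auto simp: T_def Fi_def F_def)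
    next
      case False
      then show ?thesis using zD
        by (intro exI[of _ None]) (auto simp: T_def Fi_def F_def D_def)
    qed
  qed
  have Fy: "F (y n) = real n" for n
  proof -
    have yW: "y n \<in> W" unfolding W_def using yg(1)[of n] by blast
    have "idx (y n) = n" by (rule idx[OF yg(1)[of n]])
    then show ?thesis using yW yg(3)[of n] by (simp add: F_def)
  qed
  have yD: "y n \<in> topspace (subtopology X D)" for n
  proof -
    have "y n \<in> D" unfolding D_def W_def using yg(1)[of n] by blast
    moreover have "D \<subseteq> topspace X" using DV Vt by (rule subset_trans)
    ultimately show ?thesis by (simp add: topspace_subtopology subsetD)
  qed
  have nb: "\<not> bounded (F ` topspace (subtopology X D))"
  proof
    assume "bounded (F ` topspace (subtopology X D))"
    then obtain B where B: "\<forall>r \<in> F ` topspace (subtopology X D). norm r \<le> B"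
      unfolding bounded_iff by (elim exE)
    obtain n :: nat where nB: "real n > B" using reals_Archimedean2 by blast
    have "F (y n) \<in> F ` topspace (subtopology X D)" using yD[of n] by (rule imageI)
    then have "norm (F (y n)) \<le> B" using B by (rule bspec[rotated])
    then show False using nB Fy[of n] by simp
  qed
  have "\<not> pseudocompact_space (subtopology X D)"
  proof
    assume "pseudocompact_space (subtopology X D)"
    then have "bounded (F ` topspace (subtopology X D))"
      unfolding pseudocompact_space_def using cont by (elim allE impE)
    with nb show False by contradiction
  qed
  then show ?thesis using DV dense by (intro exI[of _ D] conjI)
qed

theorem mainTheorem5:
  fixes X :: "'a topology"
  assumes "tychonoff_space X" and "locally_dense_pseudocompact X"
  shows "X = discrete_topology (topspace X)"
proof (rule ccontr)
  assume nd: "X \<noteq> discrete_topology (topspace X)"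
  have CR: "completely_regular_space X" and T1: "t1_space X"
    using assms(1) by (auto simp: tychonoff_space_def)
  have H: "Hausdorff_space X"
    by (rule regular_t1_imp_Hausdorff_space[OF completely_regular_imp_regular_space[OF CR] T1])
  have "\<not> (\<forall>x \<in> topspace X. openin X {x})"
  proof
    assume "\<forall>x \<in> topspace X. openin X {x}"
    then have "discrete_topology (topspace X) = X"
      by (simp add: discrete_topology_unique)
    then have "X = discrete_topology (topspace X)" by (rule sym)
    with nd show False by contradiction
  qed
  then obtain x where x: "x \<in> topspace X" "\<not> openin X {x}" by blast
  obtain V where V: "openin X V" "x \<in> V" "dense_pseudocompact_space (subtopology X V)"
  proof -
    have "x \<in> topspace X \<and> openin X (topspace X)" using x(1) by simp
    then have "\<exists>V. openin X V \<and> x \<in> V \<and> V \<subseteq> topspace X \<and> dense_pseudocompact_space (subtopology X V)"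
      using assms(2) unfolding locally_dense_pseudocompact_def by blast
    then show ?thesis using that by blast
  qed
  obtain U :: "nat \<Rightarrow> 'a set" where U: "\<And>n. openin X (U n)" "\<And>n. U n \<noteq> {}" "\<And>n. U n \<subseteq> V"
    "\<And>m n. m \<noteq> n \<Longrightarrow> U m \<inter> U n = {}"
  proof -
    obtain U :: "nat \<Rightarrow> 'a set" where "(\<forall>n. openin X (U n) \<and> U n \<noteq> {} \<and> U n \<subseteq> V)"
      "(\<forall>m n. m \<noteq> n \<longrightarrow> U m \<inter> U n = {})"
      using disjoint_seq[OF H x(2) V(1,2)] by (elim exE conjE)
    then have a: "\<And>n. openin X (U n)" "\<And>n. U n \<noteq> {}" "\<And>n. U n \<subseteq> V"
      "\<And>m n. m \<noteq> n \<Longrightarrow> U m \<inter> U n = {}" by blast+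
    show ?thesis by (rule that[OF a])
  qed
  obtain D where D: "D \<subseteq> V" "V \<subseteq> X closure_of D" "\<not> pseudocompact_space (subtopology X D)"
  proof -
    have "\<exists>D. D \<subseteq> V \<and> V \<subseteq> X closure_of D \<and> \<not> pseudocompact_space (subtopology X D)"
      by (rule not_pseudo[OF CR V(1) U(1) U(2) U(3) U(4)])
    then obtain D where "D \<subseteq> V" "V \<subseteq> X closure_of D" "\<not> pseudocompact_space (subtopology X D)"
      by (elim exE conjE)
    then show ?thesis by (rule that)
  qed
  have Vt: "V \<subseteq> topspace X" by (rule openin_subset[OF V(1)])
  have VD: "V \<inter> D = D" using D(1) by blast
  have cl: "(subtopology X V) closure_of D = V"
  proof -
    have "(subtopology X V) closure_of D = V \<inter> X closure_of (V \<inter> D)"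
      by (rule closure_of_subtopology)
    then show ?thesis using D(2) by (simp add: VD inf.absorb1)
  qed
  have sub0: "D \<subseteq> topspace X \<inter> V" using D(1) Vt by blast
  have sub: "D \<subseteq> topspace (subtopology X V)"
    using sub0 by (simp only: topspace_subtopology)
  have tV: "topspace (subtopology X V) = V"
    by (simp only: topspace_subtopology) (rule inf.absorb2[OF Vt])
  have cl': "(subtopology X V) closure_of D = topspace (subtopology X V)"
    using cl tV by (rule trans[OF _ sym])
  have ps: "pseudocompact_space (subtopology (subtopology X V) D)"
    using V(3)[unfolded dense_pseudocompact_space_def, rule_format, OF conjI[OF sub cl']] .
  have eq: "subtopology (subtopology X V) D = subtopology X D"
    by (simp only: subtopology_subtopology VD)
  have "pseudocompact_space (subtopology X D)" using ps by (simp only: eq)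
  with D(3) show False by contradiction
qed

end
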